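(* Let $X$ be a topological space, $Y$ a metric space, $\alpha\ge 1$ a countable ordinal, and $f:X\to Y$ a Baire-$\alpha$ function. Then there exists a sequence $(G_n)_{n=1}^{\infty}$ of $\Sigma_\alpha$ subsets of $X\times Y$ such that $\bigcap_{n=1}^{\infty}G_n=gr(f)$ and $diam(G_n(x))\to 0$ as $n\to\infty$ for each $x\in X$. Furthermore, if $Y$ is a Fréchet space (with its translation invariant metric), the sets $G_n$ can be chosen to be $\Sigma_\alpha$-strips.
   Context: Borel classes in a topological space: a set is in $\Sigma_1$ iff it is open; for a countable ordinal $\alpha\ge1$, a set is in $\Pi_\alpha$ iff its complement is in $\Sigma_\alpha$; for $\alpha>1$, a set is in $\Sigma_\alpha$ iff it is a countable union $\bigcup_i A_i$ with each $A_i\in\Pi_{\alpha_i}$ for some $\alpha_i<\alpha$. Baire classes: Baire-0 functions are the continuous ones; for $\alpha\ge1$, a function is Baire-$\alpha$ if it is the pointwise limit of a sequence of functions $f_n$, each Baire-$\alpha_n$ with $\alpha_n<\alpha$. $gr(f)=\{(x,f(x)):x\in X\}$. For $G\subseteq X\times Y$ and $x\in X$, $G(x)=\{y\in Y:(x,y)\in G\}$; diameters are with respect to the metric of $Y$. A Fréchet space is a locally convex topological vector space that is complete with respect to a translation invariant metric. If $Y$ is a Fréchet space, a $\Sigma_\alpha$-strip is a $\Sigma_\alpha$ set $S\subseteq X\times Y$ such that $S(x)$ is convex for every $x\in X$. *)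

theory Defs
  imports "HOL-Analysis.Analysis"
begin

text \<open>Ordinals are represented by elements of an arbitrary well-ordered type 'o;
  the least element plays the role of 0, its successor the role of 1.\<close>

definition ord_zero :: "'o::wellorder \<Rightarrow> bool" where
  "ord_zero \<alpha> \<longleftrightarrow> (\<forall>\<beta>. \<alpha> \<le> \<beta>)"

definition ord_one :: "'o::wellorder \<Rightarrow> bool" where
  "ord_one \<alpha> \<longleftrightarrow> \<not> ord_zero \<alpha> \<and> (\<forall>\<beta><\<alpha>. ord_zero \<beta>)"

definition countable_ordinal :: "'o::wellorder \<Rightarrow> bool" where
  "countable_ordinal \<alpha> \<longleftrightarrow> countable {\<beta>. \<beta> < \<alpha>}"

inductive borel_Sigma :: "'o::wellorder \<Rightarrow> 'a::topological_space set \<Rightarrow> bool" where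
  Sigma_one: "ord_one \<alpha> \<Longrightarrow> open A \<Longrightarrow> borel_Sigma \<alpha> A"
| Sigma_step: "\<not> ord_zero \<alpha> \<Longrightarrow> \<not> ord_one \<alpha> \<Longrightarrow>
     (\<forall>i::nat. \<exists>\<beta><\<alpha>. borel_Sigma \<beta> (- A i)) \<Longrightarrow> borel_Sigma \<alpha> (\<Union>i. A i)"

definition borel_Pi :: "'o::wellorder \<Rightarrow> 'a::topological_space set \<Rightarrow> bool" where
  "borel_Pi \<alpha> A \<longleftrightarrow> borel_Sigma \<alpha> (- A)"

inductive baire_class :: "'o::wellorder \<Rightarrow> ('a::topological_space \<Rightarrow> 'b::metric_space) \<Rightarrow> bool" where
  baire_zero: "ord_zero \<alpha> \<Longrightarrow> continuous_on UNIV f \<Longrightarrow> baire_class \<alpha> f"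
| baire_step: "\<not> ord_zero \<alpha> \<Longrightarrow> (\<forall>n::nat. \<exists>\<beta><\<alpha>. baire_class \<beta> (F n)) \<Longrightarrow>
     (\<forall>x. (\<lambda>n. F n x) \<longlonglongrightarrow> f x) \<Longrightarrow> baire_class \<alpha> f"

definition graph :: "('a \<Rightarrow> 'b) \<Rightarrow> ('a \<times> 'b) set" where
  "graph f = {(x, f x) | x. True}"

definition xsection :: "('a \<times> 'b) set \<Rightarrow> 'a \<Rightarrow> 'b set" where
  "xsection G x = {y. (x, y) \<in> G}"

text \<open>Diameter with values in [0,\<infinity>] (unbounded sets have diameter \<infinity>).\<close>
definition diam :: "'b::metric_space set \<Rightarrow> ennreal" where
  "diam S = (SUP p\<in>S \<times> S. ennreal (dist (fst p) (snd p)))"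

text \<open>Real Frechet space: locally convex topological vector space whose topology is given by a
  complete translation invariant metric (the metric of the type).\<close>
definition frechet_space :: "'b::{real_vector, complete_space} itself \<Rightarrow> bool" where
  "frechet_space _ \<longleftrightarrow>
     (\<forall>x y z::'b. dist (x + z) (y + z) = dist x y) \<and>
     continuous_on UNIV (\<lambda>p::'b \<times> 'b. fst p + snd p) \<and>
     continuous_on UNIV (\<lambda>p::real \<times> 'b. fst p *\<^sub>R snd p) \<and>
     (\<forall>U x. open U \<and> (x::'b) \<in> U \<longrightarrow> (\<exists>V. open V \<and> convex V \<and> x \<in> V \<and> V \<subseteq> U))"

definition Sigma_strip :: "'o::wellorder \<Rightarrow> ('a::topological_space \<times> 'b::{real_vector, metric_space}) set \<Rightarrow> bool" where
  "Sigma_strip \<alpha> S \<longleftrightarrow> borel_Sigma \<alpha> S \<and> (\<forall>x. convex (xsection S x))"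

end

theory Submission
  imports Defs
begin


lemma not_zero_if_less: "(\<beta>::'o::wellorder) < \<alpha> \<Longrightarrow> \<not> ord_zero \<alpha>"
  unfolding ord_zero_def using not_le by blast

lemma ex_ord_zero: "\<exists>z::'o::wellorder. ord_zero z"
  unfolding ord_zero_def by (rule exI[of _ "LEAST x. True"]) (auto intro: Least_le)

lemma ex_ord_one:
  assumes "\<not> ord_zero (\<alpha>::'o::wellorder)" "\<not> ord_one \<alpha>"
  shows "\<exists>\<gamma><\<alpha>. ord_one \<gamma>"
proof -
  from assms obtain \<beta> where b: "\<beta> < \<alpha>" "\<not> ord_zero \<beta>" unfolding ord_one_def by blast
  define \<gamma> :: 'o where "\<gamma> = (LEAST g. \<not> ord_zero g)"
  have g1: "\<not> ord_zero \<gamma>" unfolding \<gamma>_def by (rule LeastI[of _ \<beta>]) (rule b(2))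
  have g2: "\<gamma> \<le> \<beta>" unfolding \<gamma>_def by (rule Least_le) (rule b(2))
  have g3: "\<forall>d<\<gamma>. ord_zero d" unfolding \<gamma>_def using not_less_Least by blast
  show ?thesis using g1 g2 g3 b(1) unfolding ord_one_def by (meson le_less_trans)
qed

lemma Sigma_cases':
  assumes "borel_Sigma \<alpha> A"
  shows "(ord_one \<alpha> \<and> open A) \<or> (\<not> ord_zero \<alpha> \<and> \<not> ord_one \<alpha> \<and>
     (\<exists>B. A = (\<Union>i. B i) \<and> (\<forall>i::nat. \<exists>\<beta><\<alpha>. borel_Sigma \<beta> (- B i))))"
  using assms by cases auto

lemma Sig_union:
  fixes A :: "nat \<Rightarrow> 'a::topological_space set"
  assumes "\<not> ord_zero \<alpha>" "\<And>i::nat. borel_Sigma \<alpha> (A i)"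
  shows "borel_Sigma \<alpha> (\<Union>i. A i)"
proof (cases "ord_one \<alpha>")
  case True
  then have "open (A i)" for i using Sigma_cases'[OF assms(2)[of i]] by auto
  then show ?thesis using True by (intro Sigma_one) auto
next
  case False
  have "\<forall>i. \<exists>B::nat \<Rightarrow> 'a set. A i = (\<Union>j. B j) \<and> (\<forall>j::nat. \<exists>\<beta><\<alpha>. borel_Sigma \<beta> (- B j))"
  proof
    fix i
    show "\<exists>B::nat \<Rightarrow> 'a set. A i = (\<Union>j. B j) \<and> (\<forall>j::nat. \<exists>\<beta><\<alpha>. borel_Sigma \<beta> (- B j))"
      using Sigma_cases'[OF assms(2)[of i]] False by blast
  qed
  from choice[OF this] obtain B :: "nat \<Rightarrow> nat \<Rightarrow> 'a set" where
    B0: "\<forall>i. A i = (\<Union>j. B i j) \<and> (\<forall>j::nat. \<exists>\<beta><\<alpha>. borel_Sigma \<beta> (- B i j))"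
    by auto
  have B: "\<And>i. A i = (\<Union>j. B i j)" "\<And>i j. \<exists>\<beta><\<alpha>. borel_Sigma \<beta> (- B i j)"
    using B0 by auto
  define C where "C m = B (fst (prod_decode m)) (snd (prod_decode m))" for m
  have "(\<Union>i. A i) = (\<Union>m. C m)"
  proof
    show "(\<Union>i. A i) \<subseteq> (\<Union>m. C m)"
    proof
      fix x assume "x \<in> (\<Union>i. A i)"
      then obtain i j where "x \<in> B i j" using B(1) by blast
      then have "x \<in> C (prod_encode (i, j))" unfolding C_def by simp
      then show "x \<in> (\<Union>m. C m)" by blast
    qed
    show "(\<Union>m. C m) \<subseteq> (\<Union>i. A i)" unfolding C_def using B(1) by blast
  qed
  moreover have "borel_Sigma \<alpha> (\<Union>m. C m)"
    using assms(1) False B(2) unfolding C_def by (intro Sigma_step) auto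
  ultimately show ?thesis by simp
qed

lemma Sig_closed:
  assumes "\<not> ord_zero \<alpha>" "\<not> ord_one \<alpha>" "closed C"
  shows "borel_Sigma \<alpha> C"
proof -
  obtain \<gamma> where g: "\<gamma> < \<alpha>" "ord_one \<gamma>" using ex_ord_one assms by blast
  then have "borel_Sigma \<gamma> (- C)" using assms(3) by (intro Sigma_one) (auto simp: open_Compl)
  then have "borel_Sigma \<alpha> (\<Union>i::nat. C)" using assms g by (intro Sigma_step) auto
  then show ?thesis by simp
qed

lemma Sig_clopen:
  assumes "\<not> ord_zero \<alpha>" "open C" "closed C"
  shows "borel_Sigma \<alpha> C"
  using assms Sig_closed Sigma_one by blast

lemma baire_zero_cases: "baire_class \<beta> g \<Longrightarrow> ord_zero \<beta> \<Longrightarrow> continuous_on UNIV g"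
  by (erule baire_class.cases) auto

lemma baire_step_cases: "baire_class \<beta> g \<Longrightarrow> \<not> ord_zero \<beta> \<Longrightarrow>
   \<exists>F. (\<forall>n::nat. \<exists>\<gamma><\<beta>. baire_class \<gamma> (F n)) \<and> (\<forall>x. (\<lambda>n. F n x) \<longlonglongrightarrow> g x)"
  by (erule baire_class.cases) auto

lemma cont_baire:
  fixes \<delta> :: "'o::wellorder"
  assumes "continuous_on UNIV g"
  shows "baire_class \<delta> g"
proof (cases "ord_zero \<delta>")
  case True
  then show ?thesis using assms by (rule baire_zero)
next
  case False
  obtain z :: 'o where z: "ord_zero z" using ex_ord_zero by blast
  then have "z < \<delta>" using False unfolding ord_zero_def by (metis order.order_iff_strict)
  have "baire_class z g" using z assms by (rule baire_zero)
  then show ?thesis using False \<open>z < \<delta>\<close> by (intro baire_step[of _ "\<lambda>n. g"]) auto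
qed

lemma baire_mono:
  assumes "baire_class \<gamma> g" "\<gamma> \<le> \<delta>"
  shows "baire_class \<delta> g"
proof (cases "\<gamma> = \<delta>")
  case True then show ?thesis using assms by simp
next
  case False
  then have "\<gamma> < \<delta>" using assms(2) by simp
  then show ?thesis using assms(1) not_zero_if_less by (intro baire_step[of _ "\<lambda>n. g"]) auto
qed

lemma cont_tendsto: "continuous_on UNIV \<phi> \<Longrightarrow> (g \<longlongrightarrow> l) F \<Longrightarrow> ((\<lambda>x. \<phi> (g x)) \<longlongrightarrow> \<phi> l) F"
  by (rule continuous_on_tendsto_compose[of UNIV]) auto

lemma baire_comp:
  assumes "baire_class \<beta> g" "continuous_on UNIV \<phi>"
  shows "baire_class \<beta> (\<lambda>x. \<phi> (g x))"
  using assms(1)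
proof induction
  case (baire_zero \<alpha> f)
  then show ?case using assms(2)
    by (intro baire_class.baire_zero) (auto intro: continuous_on_compose2[OF assms(2)])
next
  case (baire_step \<alpha> F f)
  show ?case
  proof (rule baire_class.baire_step)
    show "\<not> ord_zero \<alpha>" by fact
    show "\<forall>n. \<exists>\<beta><\<alpha>. baire_class \<beta> (\<lambda>x. \<phi> (F n x))" using baire_step.IH by blast
    show "\<forall>x. (\<lambda>n. \<phi> (F n x)) \<longlonglongrightarrow> \<phi> (f x)"
      using baire_step.hyps(2) assms(2) cont_tendsto by blast
  qed
qed

lemma baire_precomp:
  assumes "baire_class \<beta> g" "continuous_on UNIV \<psi>"
  shows "baire_class \<beta> (\<lambda>x. g (\<psi> x))"
  using assms(1)
proof induction
  case (baire_zero \<alpha> f)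
  then show ?case using assms(2)
    by (intro baire_class.baire_zero) (auto intro: continuous_on_compose2[OF _ assms(2)])
next
  case (baire_step \<alpha> F f)
  show ?case
  proof (rule baire_class.baire_step)
    show "\<not> ord_zero \<alpha>" by fact
    show "\<forall>n. \<exists>\<beta><\<alpha>. baire_class \<beta> (\<lambda>x. F n (\<psi> x))" using baire_step.IH by blast
    show "\<forall>x. (\<lambda>n. F n (\<psi> x)) \<longlonglongrightarrow> f (\<psi> x)"
      using baire_step.hyps(2) by blast
  qed
qed

lemma baire_bin:
  fixes \<phi> :: "'b::metric_space \<times> 'c::metric_space \<Rightarrow> 'd::metric_space"
  assumes "baire_class (\<beta>::'o::wellorder) (g1::'a::topological_space \<Rightarrow> 'b)"
    "baire_class \<beta> (g2::'a \<Rightarrow> 'c)" "continuous_on UNIV \<phi>"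
  shows "baire_class \<beta> (\<lambda>x. \<phi> (g1 x, g2 x))"
  using assms(1,2)
proof (induction \<beta> arbitrary: g1 g2 rule: less_induct)
  case (less \<beta>)
  show ?case
  proof (cases "ord_zero \<beta>")
    case True
    then have "continuous_on UNIV g1" "continuous_on UNIV g2"
      using less.prems baire_zero_cases by auto
    then have "continuous_on UNIV (\<lambda>x. (g1 x, g2 x))" by (rule continuous_on_Pair)
    then have "continuous_on UNIV (\<lambda>x. \<phi> (g1 x, g2 x))"
      by (rule continuous_on_compose2[OF assms(3)]) auto
    then show ?thesis using True by (simp add: baire_zero)
  next
    case False
    obtain F where F: "\<forall>n. \<exists>\<gamma><\<beta>. baire_class \<gamma> (F n)" "\<forall>x. (\<lambda>n. F n x) \<longlonglongrightarrow> g1 x"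
      using baire_step_cases less.prems(1) False by blast
    obtain G where G: "\<forall>n. \<exists>\<gamma><\<beta>. baire_class \<gamma> (G n)" "\<forall>x. (\<lambda>n. G n x) \<longlonglongrightarrow> g2 x"
      using baire_step_cases less.prems(2) False by blast
    show ?thesis
    proof (rule baire_step[OF False])
      show "\<forall>n. \<exists>\<gamma><\<beta>. baire_class \<gamma> (\<lambda>x. \<phi> (F n x, G n x))"
      proof
        fix n
        obtain a where a: "a < \<beta>" "baire_class a (F n)" using F(1) by blast
        obtain b where b: "b < \<beta>" "baire_class b (G n)" using G(1) by blast
        have d: "max a b < \<beta>" using a b by simp
        have "baire_class (max a b) (F n)" "baire_class (max a b) (G n)"
          using baire_mono[OF a(2)] baire_mono[OF b(2)] by auto
        then have "baire_class (max a b) (\<lambda>x. \<phi> (F n x, G n x))" by (rule less.IH[OF d])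
        then show "\<exists>\<gamma><\<beta>. baire_class \<gamma> (\<lambda>x. \<phi> (F n x, G n x))" using d by blast
      qed
      show "\<forall>x. (\<lambda>n. \<phi> (F n x, G n x)) \<longlonglongrightarrow> \<phi> (g1 x, g2 x)"
      proof
        fix x
        have "(\<lambda>n. (F n x, G n x)) \<longlonglongrightarrow> (g1 x, g2 x)"
          using F(2) G(2) by (intro tendsto_Pair) auto
        then show "(\<lambda>n. \<phi> (F n x, G n x)) \<longlonglongrightarrow> \<phi> (g1 x, g2 x)"
          by (rule cont_tendsto[OF assms(3)])
      qed
    qed
  qed
qed



definition sand :: "'o::wellorder \<Rightarrow> ('a::topological_space \<Rightarrow> real) \<Rightarrow> real \<Rightarrow> real \<Rightarrow> bool" where
  "sand \<alpha> h a b \<longleftrightarrow> (\<exists>S::'a set. borel_Sigma \<alpha> S \<and> {x. h x < a} \<subseteq> S \<and> S \<subseteq> {x. h x < b})"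

lemma sand_base:
  fixes h :: "'a::topological_space \<Rightarrow> real"
  assumes "continuous_on UNIV h" "\<not> ord_zero \<alpha>" "a < b"
  shows "sand \<alpha> h a b"
proof (cases "ord_one \<alpha>")
  case True
  have "open {x. h x < a}" using assms(1) by (intro open_Collect_less) (auto intro: continuous_on_const)
  then show ?thesis unfolding sand_def using True assms
    by (intro exI[of _ "{x. h x < a}"]) (auto intro: Sigma_one)
next
  case False
  have "closed {x. h x \<le> a}" using assms(1) by (intro closed_Collect_le) (auto intro: continuous_on_const)
  then show ?thesis unfolding sand_def using Sig_closed[OF assms(2) False] assms(3)
    by (intro exI[of _ "{x. h x \<le> a}"]) auto
qed

lemma sand_step:
  fixes h :: "'a::topological_space \<Rightarrow> real" and \<beta> :: "'o::wellorder"
  assumes nz: "\<not> ord_zero \<beta>"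
    and IH: "\<And>k. \<exists>\<gamma><\<beta>. \<forall>\<alpha>>\<gamma>. \<forall>a b. a < b \<longrightarrow> sand \<alpha> (\<lambda>x. - H k x) a b"
    and lim: "\<And>x. (\<lambda>k. H k x) \<longlonglongrightarrow> h x"
    and lt: "\<beta> < \<alpha>" and ab: "a < b"
  shows "sand \<alpha> h a b"
proof -
  define c where "c = a + (b - a) / 3"
  define d where "d = a + 2 * (b - a) / 3"
  have cd: "a < c" "c < d" "d < b" using ab unfolding c_def d_def by (auto simp: field_simps)
  have "\<forall>k. \<exists>S::'a set. borel_Sigma \<beta> S \<and> {x. - H k x < - d} \<subseteq> S \<and> S \<subseteq> {x. - H k x < - c}"
  proof
    fix k
    obtain \<gamma> where "\<gamma> < \<beta>" "\<forall>\<alpha>>\<gamma>. \<forall>a b. a < b \<longrightarrow> sand \<alpha> (\<lambda>x. - H k x) a b" using IH by blast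
    then have "sand \<beta> (\<lambda>x. - H k x) (-d) (-c)" using cd by auto
    then show "\<exists>S::'a set. borel_Sigma \<beta> S \<and> {x. - H k x < - d} \<subseteq> S \<and> S \<subseteq> {x. - H k x < - c}"
      unfolding sand_def by simp
  qed
  from choice[OF this] obtain S :: "nat \<Rightarrow> 'a set" where
    S0: "\<forall>k. borel_Sigma \<beta> (S k) \<and> {x. - H k x < - d} \<subseteq> S k \<and> S k \<subseteq> {x. - H k x < - c}"
    by auto
  have S: "\<And>k. borel_Sigma \<beta> (S k)" "\<And>k. {x. - H k x < - d} \<subseteq> S k" "\<And>k. S k \<subseteq> {x. - H k x < - c}"
    using S0 by auto
  define A where "A m = (\<Inter>k. - S (m + k))" for m
  have SAm: "borel_Sigma \<beta> (- A m)" for m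
  proof -
    have "- A m = (\<Union>k. S (m + k))" unfolding A_def by auto
    then show ?thesis using Sig_union[OF nz, of "\<lambda>k. S (m + k)"] S(1) by simp
  qed
  have nz\<alpha>: "\<not> ord_zero \<alpha>" using lt not_zero_if_less by blast
  have n1: "\<not> ord_one \<alpha>" using lt nz unfolding ord_one_def by blast
  have SA: "borel_Sigma \<alpha> (\<Union>m. A m)"
    using nz\<alpha> n1 SAm lt by (intro Sigma_step) auto
  have sub1: "{x. h x < a} \<subseteq> (\<Union>m. A m)"
  proof
    fix x assume "x \<in> {x. h x < a}"
    then have "h x < c" using cd by simp
    then have "eventually (\<lambda>k. H k x < c) sequentially" using lim order_tendstoD(2) by blast
    then obtain m where m: "\<And>k. k \<ge> m \<Longrightarrow> H k x < c" unfolding eventually_sequentially by blast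
    have "x \<notin> S (m + k)" for k
    proof
      assume "x \<in> S (m + k)"
      then have "- H (m + k) x < - c" using S(3) by blast
      then show False using m[of "m + k"] by simp
    qed
    then have "x \<in> A m" unfolding A_def by blast
    then show "x \<in> (\<Union>m. A m)" by blast
  qed
  have sub2: "(\<Union>m. A m) \<subseteq> {x. h x < b}"
  proof
    fix x assume "x \<in> (\<Union>m. A m)"
    then obtain m where "x \<in> A m" by blast
    then have nS: "\<And>k. x \<notin> S (m + k)" unfolding A_def by blast
    have "H k x \<le> d" if "k \<ge> m" for k
    proof -
      have "x \<notin> S (m + (k - m))" by (rule nS)
      then have "x \<notin> S k" using that by simp
      then show ?thesis using S(2)[of k] by force
    qed
    then have "h x \<le> d" using LIMSEQ_le_const2[OF lim] by blast
    then show "x \<in> {x. h x < b}" using cd by simp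
  qed
  show ?thesis unfolding sand_def using SA sub1 sub2 by blast
qed

lemma sand_baire:
  fixes h :: "'a::topological_space \<Rightarrow> real" and \<beta> :: "'o::wellorder"
  assumes "baire_class \<beta> h"
  shows "(\<forall>\<alpha>>\<beta>. \<forall>a b. a < b \<longrightarrow> sand \<alpha> h a b) \<and> (\<forall>\<alpha>>\<beta>. \<forall>a b. a < b \<longrightarrow> sand \<alpha> (\<lambda>x. - h x) a b)"
  using assms
proof induction
  case (baire_zero \<beta> f)
  have c2: "continuous_on UNIV (\<lambda>x. - f x)" using baire_zero(2) by (rule continuous_on_minus)
  show ?case using sand_base[OF baire_zero(2)] sand_base[OF c2] not_zero_if_less by blast
next
  case (baire_step \<beta> F f)
  have IH1: "\<And>k. \<exists>\<gamma><\<beta>. \<forall>\<alpha>>\<gamma>. \<forall>a b. a < b \<longrightarrow> sand \<alpha> (\<lambda>x. - F k x) a b"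
    using baire_step.IH by blast
  have IH2: "\<And>k. \<exists>\<gamma><\<beta>. \<forall>\<alpha>>\<gamma>. \<forall>a b. a < b \<longrightarrow> sand \<alpha> (\<lambda>x. - (- F k x)) a b"
    unfolding minus_minus using baire_step.IH by blast
  have l2: "\<And>x. (\<lambda>k. - F k x) \<longlonglongrightarrow> - f x" using baire_step.hyps(2) by (intro tendsto_minus) auto
  have l1: "\<And>x. (\<lambda>k. F k x) \<longlonglongrightarrow> f x" using baire_step.hyps(2) by blast
  have "sand \<alpha> f a b" if "\<beta> < \<alpha>" "a < b" for \<alpha> a b
    using sand_step[where H=F and h=f, OF baire_step.hyps(1) IH1 l1 that] .
  moreover have "sand \<alpha> (\<lambda>x. - f x) a b" if "\<beta> < \<alpha>" "a < b" for \<alpha> a b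
    using sand_step[where H="\<lambda>k x. - F k x" and h="\<lambda>x. - f x", OF baire_step.hyps(1) IH2 l2 that] .
  ultimately show ?case by blast
qed

lemma sand_open:
  fixes g :: "'a::topological_space \<Rightarrow> real"
  assumes "\<And>a b. a < b \<Longrightarrow> sand \<alpha> g a b" "\<not> ord_zero \<alpha>"
  shows "borel_Sigma \<alpha> {x. g x < c}"
proof -
  have "\<forall>j::nat. \<exists>S::'a set. borel_Sigma \<alpha> S \<and> {x. g x < c - inverse (real (Suc j))} \<subseteq> S \<and>
      S \<subseteq> {x. g x < c - inverse (real (Suc (Suc j)))}"
  proof
    fix j :: nat
    have "c - inverse (real (Suc j)) < c - inverse (real (Suc (Suc j)))"
      by (simp add: field_simps)
    then show "\<exists>S::'a set. borel_Sigma \<alpha> S \<and> {x. g x < c - inverse (real (Suc j))} \<subseteq> S \<and>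
      S \<subseteq> {x. g x < c - inverse (real (Suc (Suc j)))}" using assms(1) unfolding sand_def by blast
  qed
  from choice[OF this] obtain S :: "nat \<Rightarrow> 'a set" where
    S: "\<forall>j. borel_Sigma \<alpha> (S j) \<and> {x. g x < c - inverse (real (Suc j))} \<subseteq> S j \<and>
      S j \<subseteq> {x. g x < c - inverse (real (Suc (Suc j)))}" by auto
  have "{x. g x < c} = (\<Union>j. S j)"
  proof
    show "{x. g x < c} \<subseteq> (\<Union>j. S j)"
    proof
      fix x assume "x \<in> {x. g x < c}"
      then have "0 < c - g x" by simp
      then obtain j where "inverse (real (Suc j)) < c - g x" using reals_Archimedean by blast
      then have "g x < c - inverse (real (Suc j))" by simp
      then have "x \<in> {x. g x < c - inverse (real (Suc j))}" by simp
      then have "x \<in> S j" using S by blast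
      then show "x \<in> (\<Union>j. S j)" by blast
    qed
    show "(\<Union>j. S j) \<subseteq> {x. g x < c}"
    proof
      fix x assume "x \<in> (\<Union>j. S j)"
      then obtain j where "x \<in> S j" by blast
      then have "g x < c - inverse (real (Suc (Suc j)))" using S by auto
      moreover have "0 < inverse (real (Suc (Suc j)))" by simp
      ultimately have "g x < c" by linarith
      then show "x \<in> {x. g x < c}" by simp
    qed
  qed
  moreover have "borel_Sigma \<alpha> (\<Union>j. S j)" using S by (intro Sig_union[OF assms(2)]) blast
  ultimately show ?thesis by simp
qed

lemma baire_preimage_open:
  fixes g :: "'a::topological_space \<Rightarrow> 'b::metric_space" and \<beta> :: "'o::wellorder"
  assumes "baire_class \<beta> g" "\<beta> < \<alpha>" "open V"
  shows "borel_Sigma \<alpha> (g -` V)"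
proof (cases "V = UNIV")
  case True
  then show ?thesis using Sig_clopen[of \<alpha> UNIV] not_zero_if_less[OF assms(2)] by simp
next
  case False
  have cV: "closed (- V)" "- V \<noteq> {}" using assms(3) False by auto
  have c: "continuous_on UNIV (\<lambda>z. - infdist z (- V))"
    by (intro continuous_intros)
  have hb: "baire_class \<beta> (\<lambda>x. - infdist (g x) (- V))"
    using baire_comp[OF assms(1) c] by simp
  have "g -` V = {x. - infdist (g x) (- V) < 0}"
  proof -
    have "g x \<in> V \<longleftrightarrow> - infdist (g x) (- V) < 0" for x
      using in_closed_iff_infdist_zero[OF cV, of "g x"] infdist_nonneg[of "g x" "- V"] by auto
    then show ?thesis by auto
  qed
  moreover have "borel_Sigma \<alpha> {x. - infdist (g x) (- V) < 0}"
    using sand_baire[OF hb] assms(2) not_zero_if_less[OF assms(2)] by (intro sand_open) auto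
  ultimately show ?thesis by simp
qed

lemma ennreal_tendsto_0I:
  fixes u :: "nat \<Rightarrow> ennreal"
  assumes "\<And>e. e > 0 \<Longrightarrow> \<exists>N. \<forall>n\<ge>N. u n \<le> ennreal e"
  shows "u \<longlonglongrightarrow> 0"
proof (rule order_tendstoI)
  fix a :: ennreal assume "a < 0" then show "eventually (\<lambda>n. a < u n) sequentially" by simp
next
  fix a :: ennreal assume "0 < a"
  then obtain z :: ennreal where z: "0 < z" "z < a" using dense by blast
  have "z < top" using z(2) top_greatest[of a] by (rule less_le_trans)
  then have "z \<noteq> top" by simp
  then obtain r where r: "z = ennreal r" "0 \<le> r" by (cases z) auto
  then have "0 < r" using z by simp
  then obtain N where "\<forall>n\<ge>N. u n \<le> ennreal r" using assms by blast
  then show "eventually (\<lambda>n. u n < a) sequentially"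
    unfolding eventually_sequentially using z r by (meson le_less_trans)
qed

lemma graph_diam:
  fixes f :: "'a \<Rightarrow> 'b::metric_space" and G :: "nat \<Rightarrow> ('a \<times> 'b) set"
  assumes A: "\<And>n x. (x, f x) \<in> G n"
    and B: "\<And>x e. e > 0 \<Longrightarrow> \<exists>N. \<forall>n\<ge>N. \<forall>y\<in>xsection (G n) x. dist y (f x) < e"
  shows "(\<Inter>n. G n) = graph f \<and> (\<forall>x. (\<lambda>n. diam (xsection (G n) x)) \<longlonglongrightarrow> 0)"
proof
  show "(\<Inter>n. G n) = graph f"
  proof
    show "(\<Inter>n. G n) \<subseteq> graph f"
    proof
      fix p assume p: "p \<in> (\<Inter>n. G n)"
      obtain x y where xy: "p = (x, y)" by (cases p)
      have "dist y (f x) < e" if e: "e > 0" for e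
      proof -
        obtain N where "\<forall>n\<ge>N. \<forall>y\<in>xsection (G n) x. dist y (f x) < e" using B[OF e] by blast
        moreover have "y \<in> xsection (G N) x" using p xy unfolding xsection_def by auto
        ultimately show ?thesis by blast
      qed
      then have "dist y (f x) = 0"
        by (metis zero_le_dist less_irrefl order_neq_le_trans)
      then have "y = f x" by simp
      then show "p \<in> graph f" using xy unfolding graph_def by auto
    qed
    show "graph f \<subseteq> (\<Inter>n. G n)" using A unfolding graph_def by auto
  qed
  show "\<forall>x. (\<lambda>n. diam (xsection (G n) x)) \<longlonglongrightarrow> 0"
  proof
    fix x
    show "(\<lambda>n. diam (xsection (G n) x)) \<longlonglongrightarrow> 0"
    proof (rule ennreal_tendsto_0I)
      fix e :: real assume "e > 0"
      then obtain N where N: "\<forall>n\<ge>N. \<forall>y\<in>xsection (G n) x. dist y (f x) < e / 2"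
        using B[of "e/2"] by auto
      have "diam (xsection (G n) x) \<le> ennreal e" if "n \<ge> N" for n
        unfolding diam_def
      proof (rule SUP_least)
        fix p assume "p \<in> xsection (G n) x \<times> xsection (G n) x"
        then have "dist (fst p) (f x) < e/2" "dist (snd p) (f x) < e/2" using N that by auto
        then have "dist (fst p) (snd p) \<le> e" using dist_triangle2[of "fst p" "snd p" "f x"] by simp
        then show "ennreal (dist (fst p) (snd p)) \<le> ennreal e" by (rule ennreal_leI)
      qed
      then show "\<exists>N. \<forall>n\<ge>N. diam (xsection (G n) x) \<le> ennreal e" by blast
    qed
  qed
qed



lemma main_part1:
  fixes \<alpha> :: "'o::wellorder" and f :: "'a::topological_space \<Rightarrow> 'b::metric_space"
  assumes nz: "\<not> ord_zero \<alpha>" and bf: "baire_class \<alpha> f"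
  shows "\<exists>G :: nat \<Rightarrow> ('a \<times> 'b) set. (\<forall>n. borel_Sigma \<alpha> (G n)) \<and> (\<Inter>n. G n) = graph f \<and>
               (\<forall>x. (\<lambda>n. diam (xsection (G n) x)) \<longlonglongrightarrow> 0)"
proof -
  obtain F where F: "\<forall>n. \<exists>\<gamma><\<alpha>. baire_class \<gamma> (F n)" "\<forall>x. (\<lambda>n. F n x) \<longlonglongrightarrow> f x"
    using baire_step_cases[OF bf nz] by blast
  define G where "G n = (\<Union>k. {p::'a\<times>'b. dist (snd p) (F (n + k) (fst p)) < inverse (real (Suc n))})" for n
  have SG: "borel_Sigma \<alpha> (G n)" for n
  proof -
    have "borel_Sigma \<alpha> {p::'a\<times>'b. dist (snd p) (F (n + k) (fst p)) < inverse (real (Suc n))}" for k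
    proof -
      obtain \<gamma> where g: "\<gamma> < \<alpha>" "baire_class \<gamma> (F (n+k))" using F(1) by blast
      have b1: "baire_class \<gamma> (\<lambda>p::'a\<times>'b. snd p)" by (rule cont_baire) (intro continuous_intros)
      have b2: "baire_class \<gamma> (\<lambda>p::'a\<times>'b. F (n+k) (fst p))"
        by (rule baire_precomp[OF g(2)]) (intro continuous_intros)
      have c: "continuous_on UNIV (\<lambda>q::'b\<times>'b. dist (fst q) (snd q))" by (intro continuous_intros)
      have h: "baire_class \<gamma> (\<lambda>p::'a\<times>'b. dist (snd p) (F (n+k) (fst p)))"
        using baire_bin[OF b1 b2 c] by simp
      have "{p::'a\<times>'b. dist (snd p) (F (n + k) (fst p)) < inverse (real (Suc n))} =
          (\<lambda>p. dist (snd p) (F (n+k) (fst p))) -` {..< inverse (real (Suc n))}" by auto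
      then show ?thesis using baire_preimage_open[OF h g(1)] by simp
    qed
    then show ?thesis unfolding G_def by (intro Sig_union[OF nz])
  qed
  have "(\<Inter>n. G n) = graph f \<and> (\<forall>x. (\<lambda>n. diam (xsection (G n) x)) \<longlonglongrightarrow> 0)"
  proof (rule graph_diam)
    fix n x
    have "eventually (\<lambda>k. dist (F k x) (f x) < inverse (real (Suc n))) sequentially"
      using F(2) by (intro tendstoD) auto
    then obtain M where M: "\<And>k. k \<ge> M \<Longrightarrow> dist (F k x) (f x) < inverse (real (Suc n))"
      unfolding eventually_sequentially by blast
    have "dist (f x) (F (n + M) x) < inverse (real (Suc n))" using M[of "n+M"] by (simp add: dist_commute)
    then show "(x, f x) \<in> G n" unfolding G_def by auto
  next
    fix x and e :: real assume e: "e > 0"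
    have "eventually (\<lambda>k. dist (F k x) (f x) < e/2) sequentially"
      using F(2) e by (intro tendstoD) auto
    then obtain M where M: "\<And>k. k \<ge> M \<Longrightarrow> dist (F k x) (f x) < e/2"
      unfolding eventually_sequentially by blast
    obtain N0 where N0: "inverse (real (Suc N0)) < e/2" using reals_Archimedean e by (metis half_gt_zero)
    show "\<exists>N. \<forall>n\<ge>N. \<forall>y\<in>xsection (G n) x. dist y (f x) < e"
    proof (intro exI allI impI ballI)
      fix n y assume n: "max M N0 \<le> n" and y: "y \<in> xsection (G n) x"
      then obtain k where k: "dist y (F (n + k) x) < inverse (real (Suc n))"
        unfolding G_def xsection_def by auto
      have "inverse (real (Suc n)) \<le> inverse (real (Suc N0))" using n by (simp add: field_simps)
      moreover have "dist (F (n + k) x) (f x) < e/2" using M n by simp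
      ultimately show "dist y (f x) < e" using k N0 dist_triangle[of y "f x" "F (n+k) x"] by linarith
    qed
  qed
  then show ?thesis using SG by blast
qed



lemma tend_add:
  fixes u v :: "nat \<Rightarrow> 'c::{real_vector,metric_space}"
  assumes cA: "continuous_on UNIV (\<lambda>p::'c\<times>'c. fst p + snd p)" and "u \<longlonglongrightarrow> a" "v \<longlonglongrightarrow> b"
  shows "(\<lambda>j. u j + v j) \<longlonglongrightarrow> a + b"
  using cont_tendsto[OF cA tendsto_Pair[OF assms(2,3)]] by simp

lemma tend_scale:
  fixes v :: "nat \<Rightarrow> 'c::{real_vector,metric_space}"
  assumes cS: "continuous_on UNIV (\<lambda>p::real\<times>'c. fst p *\<^sub>R snd p)" and "s \<longlonglongrightarrow> t" "v \<longlonglongrightarrow> b"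
  shows "(\<lambda>j. s j *\<^sub>R v j) \<longlonglongrightarrow> t *\<^sub>R b"
  using cont_tendsto[OF cS tendsto_Pair[OF assms(2,3)]] by simp

lemma tend_sum:
  fixes u :: "nat \<Rightarrow> nat \<Rightarrow> 'c::{real_vector,metric_space}"
  assumes cA: "continuous_on UNIV (\<lambda>p::'c\<times>'c. fst p + snd p)" and "finite S"
    and "\<And>k. k \<in> S \<Longrightarrow> (\<lambda>j. u j k) \<longlonglongrightarrow> a k"
  shows "(\<lambda>j. \<Sum>k\<in>S. u j k) \<longlonglongrightarrow> (\<Sum>k\<in>S. a k)"
  using assms(2,3)
proof (induction S rule: finite_induct)
  case empty
  then show ?case by simp
next
  case (insert k S)
  have "(\<lambda>j. u j k + (\<Sum>k\<in>S. u j k)) \<longlonglongrightarrow> a k + (\<Sum>k\<in>S. a k)"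
    using insert by (intro tend_add[OF cA]) auto
  then show ?case using insert by simp
qed

lemma cont_sub:
  assumes cA: "continuous_on UNIV (\<lambda>p::'c::{real_vector,metric_space}\<times>'c. fst p + snd p)"
    and cS: "continuous_on UNIV (\<lambda>p::real\<times>'c. fst p *\<^sub>R snd p)"
  shows "continuous_on UNIV (\<lambda>p::'c\<times>'c. fst p - snd p)"
proof -
  have 1: "continuous_on UNIV (\<lambda>p::'c\<times>'c. ((-1::real), snd p))" by (intro continuous_intros)
  have 2: "continuous_on UNIV (\<lambda>p::'c\<times>'c. (\<lambda>q. fst q *\<^sub>R snd q) ((-1::real), snd p))"
    by (rule continuous_on_compose2[OF cS 1]) auto
  then have 2: "continuous_on UNIV (\<lambda>p::'c\<times>'c. (-1::real) *\<^sub>R snd p)" by simp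
  have 3: "continuous_on UNIV (\<lambda>p::'c\<times>'c. (fst p, (-1::real) *\<^sub>R snd p))"
    by (rule continuous_on_Pair[OF continuous_on_fst[OF continuous_on_id] 2])
  have 4: "continuous_on UNIV (\<lambda>p::'c\<times>'c. (\<lambda>q. fst q + snd q) (fst p, (-1::real) *\<^sub>R snd p))"
    by (rule continuous_on_compose2[OF cA 3]) auto
  then show ?thesis by simp
qed

lemma cont_scale_const:
  assumes cS: "continuous_on UNIV (\<lambda>p::real\<times>'c::{real_vector,metric_space}. fst p *\<^sub>R snd p)"
  shows "continuous_on UNIV (\<lambda>z::'c. c *\<^sub>R z)"
proof -
  have 1: "continuous_on UNIV (\<lambda>z::'c. (c, z))" by (intro continuous_intros)
  have "continuous_on UNIV (\<lambda>z::'c. (\<lambda>q. fst q *\<^sub>R snd q) (c, z))"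
    by (rule continuous_on_compose2[OF cS 1]) auto
  then show ?thesis by simp
qed

lemma baire_lincomb:
  fixes F :: "nat \<Rightarrow> 'a::topological_space \<Rightarrow> 'c::{real_vector,metric_space}" and \<delta> :: "'o::wellorder"
  assumes cA: "continuous_on UNIV (\<lambda>p::'c\<times>'c. fst p + snd p)"
    and cS: "continuous_on UNIV (\<lambda>p::real\<times>'c. fst p *\<^sub>R snd p)"
    and "finite S" "\<And>k. k \<in> S \<Longrightarrow> baire_class \<delta> (F k)"
  shows "baire_class \<delta> (\<lambda>x. \<Sum>k\<in>S. lam k *\<^sub>R F k x)"
  using assms(3,4)
proof (induction S rule: finite_induct)
  case empty
  then show ?case by (simp add: cont_baire)
next
  case (insert k S)
  have 1: "baire_class \<delta> (\<lambda>x. lam k *\<^sub>R F k x)"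
    using baire_comp[OF insert.prems[of k] cont_scale_const[OF cS]] by simp
  have 2: "baire_class \<delta> (\<lambda>x. \<Sum>k\<in>S. lam k *\<^sub>R F k x)" using insert by simp
  have "baire_class \<delta> (\<lambda>x. (\<lambda>q. fst q + snd q) (lam k *\<^sub>R F k x, \<Sum>k\<in>S. lam k *\<^sub>R F k x))"
    by (rule baire_bin[OF 1 2 cA])
  then show ?case using insert by simp
qed



lemma fl_le: "of_int \<lfloor>real (Suc j) * t\<rfloor> / real (Suc j) \<le> (t::real)"
proof -
  have s: "0 < real (Suc j)" by simp
  have "of_int \<lfloor>real (Suc j) * t\<rfloor> \<le> real (Suc j) * t" by simp
  then have "of_int \<lfloor>real (Suc j) * t\<rfloor> / real (Suc j) \<le> (real (Suc j) * t) / real (Suc j)"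
    using s by (intro divide_right_mono) auto
  then show ?thesis using s by simp
qed

lemma fl_lim: "(\<lambda>j. of_int \<lfloor>real (Suc j) * t\<rfloor> / real (Suc j)) \<longlonglongrightarrow> (t::real)"
proof (rule tendsto_sandwich)
  show "eventually (\<lambda>j. t - inverse (real (Suc j)) \<le> of_int \<lfloor>real (Suc j) * t\<rfloor> / real (Suc j)) sequentially"
  proof (intro always_eventually allI)
    fix j
    have s: "0 < real (Suc j)" by simp
    have "real (Suc j) * t - 1 < of_int \<lfloor>real (Suc j) * t\<rfloor>" by simp
    then have "(real (Suc j) * t - 1) / real (Suc j) < of_int \<lfloor>real (Suc j) * t\<rfloor> / real (Suc j)"
      using s by (rule divide_strict_right_mono)
    moreover have "(real (Suc j) * t - 1) / real (Suc j) = t - inverse (real (Suc j))"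
      using s by (simp add: field_simps)
    ultimately show "t - inverse (real (Suc j)) \<le> of_int \<lfloor>real (Suc j) * t\<rfloor> / real (Suc j)"
      by simp
  qed
  show "eventually (\<lambda>j. of_int \<lfloor>real (Suc j) * t\<rfloor> / real (Suc j) \<le> t) sequentially"
  proof (intro always_eventually allI)
    fix j
    show "of_int \<lfloor>real (Suc j) * t\<rfloor> / real (Suc j) \<le> t" by (rule fl_le)
  qed
  show "(\<lambda>j. t - inverse (real (Suc j))) \<longlonglongrightarrow> t"
    using tendsto_diff[OF tendsto_const LIMSEQ_inverse_real_of_nat, of t] by simp
  show "(\<lambda>j. t) \<longlonglongrightarrow> t" by simp
qed

lemma fl_nonneg: "0 \<le> (t::real) \<Longrightarrow> 0 \<le> of_int \<lfloor>real (Suc j) * t\<rfloor> / real (Suc j)"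
  by simp

lemma fl_rat: "of_int \<lfloor>real (Suc j) * t\<rfloor> / real (Suc j) \<in> \<rat>"
  by (intro Rats_divide Rats_of_int Rats_of_nat)

lemma sum_restrict_le:
  fixes g :: "nat \<Rightarrow> 'c::comm_monoid_add"
  assumes "N1 \<le> N"
  shows "(\<Sum>k\<in>{n..N}. if k \<in> {..N1} then g k else 0) = (\<Sum>k\<in>{n..N1}. g k)"
proof -
  have "(\<Sum>k\<in>{n..N}. if k \<in> {..N1} then g k else 0) = (\<Sum>k\<in>{n..N} \<inter> {..N1}. g k)"
    by (rule sum.inter_restrict[symmetric]) simp
  also have "{n..N} \<inter> {..N1} = {n..N1}" using assms by auto
  finally show ?thesis .
qed



lemma main_part2:
  fixes \<alpha> :: "'o::wellorder" and f :: "'a::topological_space \<Rightarrow> 'c::{real_vector, complete_space}"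
  assumes nz: "\<not> ord_zero \<alpha>" and fr: "frechet_space TYPE('c)" and bf: "baire_class \<alpha> f"
  shows "\<exists>G :: nat \<Rightarrow> ('a \<times> 'c) set. (\<forall>n. Sigma_strip \<alpha> (G n)) \<and> (\<Inter>n. G n) = graph f \<and>
               (\<forall>x. (\<lambda>n. diam (xsection (G n) x)) \<longlonglongrightarrow> 0)"
proof -
  have TI: "\<And>x y z::'c. dist (x + z) (y + z) = dist x y"
    and cA: "continuous_on UNIV (\<lambda>p::'c \<times> 'c. fst p + snd p)"
    and cS: "continuous_on UNIV (\<lambda>p::real \<times> 'c. fst p *\<^sub>R snd p)"
    and LC: "\<And>U x. open U \<Longrightarrow> (x::'c) \<in> U \<Longrightarrow> \<exists>V. open V \<and> convex V \<and> x \<in> V \<and> V \<subseteq> U"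
    using fr unfolding frechet_space_def by blast+
  have d0: "dist (a - b) 0 = dist a b" for a b :: 'c
    using TI[of "a - b" b 0] by simp
  have dv: "dist (a + v) a = dist v 0" for a v :: 'c
  proof -
    have "dist (v + a) (0 + a) = dist v 0" by (rule TI)
    moreover have "v + a = a + v" by (rule add.commute)
    ultimately show ?thesis by simp
  qed
  have cSub: "continuous_on UNIV (\<lambda>p::'c\<times>'c. fst p - snd p)" by (rule cont_sub[OF cA cS])
  obtain F where F: "\<forall>n. \<exists>\<gamma><\<alpha>. baire_class \<gamma> (F n)" "\<forall>x. (\<lambda>n. F n x) \<longlonglongrightarrow> f x"
    using baire_step_cases[OF bf nz] by blast
  from F(1) have "\<forall>k. \<exists>\<gamma>. \<gamma> < \<alpha> \<and> baire_class \<gamma> (F k)" by blast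
  from choice[OF this] obtain \<beta> where \<beta>: "\<And>k. \<beta> k < \<alpha>" "\<And>k. baire_class (\<beta> k) (F k)" by blast
  have "\<forall>n::nat. \<exists>V. open V \<and> convex V \<and> (0::'c) \<in> V \<and> V \<subseteq> ball 0 (inverse (real (Suc n)))"
  proof
    fix n :: nat
    show "\<exists>V. open V \<and> convex V \<and> (0::'c) \<in> V \<and> V \<subseteq> ball 0 (inverse (real (Suc n)))"
      by (rule LC) auto
  qed
  from choice[OF this] obtain V :: "nat \<Rightarrow> 'c set" where
    V0: "\<forall>n. open (V n) \<and> convex (V n) \<and> 0 \<in> V n \<and> V n \<subseteq> ball 0 (inverse (real (Suc n)))" by blast
  have V: "\<And>n. open (V n)" "\<And>n. convex (V n)" "\<And>n. 0 \<in> V n"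
    "\<And>n. V n \<subseteq> ball 0 (inverse (real (Suc n)))" using V0 by auto
  define P where "P n N lam = {p::'a\<times>'c. (\<forall>k\<in>{n..N}. 0 \<le> lam k) \<and> sum lam {n..N} = 1 \<and>
      snd p - (\<Sum>k\<in>{n..N}. lam k *\<^sub>R F k (fst p)) \<in> V n}" for n N and lam :: "nat \<Rightarrow> real"
  define G where "G n = {p. \<exists>N lam. p \<in> P n N lam}" for n
  define lq where "lq qs k = (if k < length qs then real_of_rat (qs ! k) else 0)" for qs :: "rat list" and k
  define Q where "Q n i = P n (fst (from_nat i :: nat \<times> rat list)) (lq (snd (from_nat i :: nat \<times> rat list)))" for n i

  have SP: "borel_Sigma \<alpha> (P n N lam)" for n N lam
  proof (cases "(\<forall>k\<in>{n..N}. 0 \<le> lam k) \<and> sum lam {n..N} = 1")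
    case False
    then have "P n N lam = {}" unfolding P_def by auto
    then show ?thesis using Sig_clopen[OF nz, of "{}"] by simp
  next
    case True
    then have ne: "{n..N} \<noteq> {}" by (metis sum.empty zero_neq_one)
    define \<delta> where "\<delta> = Max (\<beta> ` {n..N})"
    have "\<delta> \<in> \<beta> ` {n..N}" unfolding \<delta>_def using ne by (intro Max_in) auto
    then have \<delta>\<alpha>: "\<delta> < \<alpha>" using \<beta>(1) by auto
    have bk: "baire_class \<delta> (F k)" if "k \<in> {n..N}" for k
    proof -
      have "\<beta> k \<le> \<delta>" unfolding \<delta>_def using that by (intro Max_ge) auto
      then show ?thesis using baire_mono[OF \<beta>(2)] by blast
    qed
    have b1: "baire_class \<delta> (\<lambda>x. \<Sum>k\<in>{n..N}. lam k *\<^sub>R F k x)"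
      by (rule baire_lincomb[OF cA cS]) (auto intro: bk)
    have b2: "baire_class \<delta> (\<lambda>p::'a\<times>'c. \<Sum>k\<in>{n..N}. lam k *\<^sub>R F k (fst p))"
      using baire_precomp[OF b1, of fst] by (simp add: continuous_on_fst)
    have b3: "baire_class \<delta> (\<lambda>p::'a\<times>'c. snd p)" by (rule cont_baire) (intro continuous_intros)
    have h: "baire_class \<delta> (\<lambda>p::'a\<times>'c. snd p - (\<Sum>k\<in>{n..N}. lam k *\<^sub>R F k (fst p)))"
      using baire_bin[OF b3 b2 cSub] by simp
    have "P n N lam = (\<lambda>p::'a\<times>'c. snd p - (\<Sum>k\<in>{n..N}. lam k *\<^sub>R F k (fst p))) -` V n"
      using True unfolding P_def by auto
    then show ?thesis using baire_preimage_open[OF h \<delta>\<alpha> V(1)] by simp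
  qed

  have dens: "p \<in> (\<Union>i. Q n i)" if pP: "p \<in> P n N lam" for p n N lam
  proof -
    obtain x y where p: "p = (x, y)" by (cases p)
    from pP have l0: "\<forall>k\<in>{n..N}. 0 \<le> lam k" and l1: "sum lam {n..N} = 1"
      and vV: "y - (\<Sum>k\<in>{n..N}. lam k *\<^sub>R F k x) \<in> V n" unfolding P_def p by auto
    have "{n..N} \<noteq> {}" using l1 by (metis sum.empty zero_neq_one)
    then have nN: "n \<le> N" by simp
    have spl: "{n..N} = insert N {n..<N}" using nN by auto
    define fl where "fl j t = of_int \<lfloor>real (Suc j) * t\<rfloor> / real (Suc j)" for j and t :: real
    define mu where "mu j k = (if k = N then 1 - (\<Sum>i\<in>{n..<N}. fl j (lam i)) else fl j (lam k))" for j k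
    have l1': "lam N + sum lam {n..<N} = 1" using l1 unfolding spl by simp
    have mu_nonneg: "\<forall>k\<in>{n..N}. 0 \<le> mu j k" for j
    proof
      fix k assume k: "k \<in> {n..N}"
      show "0 \<le> mu j k"
      proof (cases "k = N")
        case True
        have "(\<Sum>i\<in>{n..<N}. fl j (lam i)) \<le> sum lam {n..<N}"
          unfolding fl_def by (intro sum_mono fl_le)
        moreover have "0 \<le> lam N" using l0 nN by auto
        ultimately show ?thesis unfolding mu_def using True l1' by simp
      next
        case False
        then show ?thesis unfolding mu_def fl_def using l0 k by (simp add: fl_nonneg)
      qed
    qed
    have mu_sum: "sum (mu j) {n..N} = 1" for j
    proof -
      have "sum (mu j) {n..<N} = (\<Sum>i\<in>{n..<N}. fl j (lam i))"
        unfolding mu_def by (intro sum.cong) auto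
      then show ?thesis unfolding spl mu_def by simp
    qed
    have mu_lim: "(\<lambda>j. mu j k) \<longlonglongrightarrow> lam k" if "k \<in> {n..N}" for k
    proof (cases "k = N")
      case True
      have "(\<lambda>j. \<Sum>i\<in>{n..<N}. fl j (lam i)) \<longlonglongrightarrow> sum lam {n..<N}"
        unfolding fl_def by (intro tendsto_sum fl_lim)
      then have "(\<lambda>j. 1 - (\<Sum>i\<in>{n..<N}. fl j (lam i))) \<longlonglongrightarrow> 1 - sum lam {n..<N}"
        by (intro tendsto_diff tendsto_const)
      moreover have "1 - sum lam {n..<N} = lam k" using l1' True by simp
      ultimately show ?thesis unfolding mu_def using True by simp
    next
      case False
      have "(\<lambda>j. fl j (lam k)) \<longlonglongrightarrow> lam k" unfolding fl_def by (rule fl_lim)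
      then show ?thesis unfolding mu_def using False by simp
    qed
    have conv0: "(\<lambda>j. \<Sum>k\<in>{n..N}. mu j k *\<^sub>R F k x) \<longlonglongrightarrow> (\<Sum>k\<in>{n..N}. lam k *\<^sub>R F k x)"
      by (intro tend_sum[OF cA] tend_scale[OF cS] mu_lim tendsto_const) auto
    have "(\<lambda>j. y + (-1::real) *\<^sub>R (\<Sum>k\<in>{n..N}. mu j k *\<^sub>R F k x)) \<longlonglongrightarrow>
        y + (-1::real) *\<^sub>R (\<Sum>k\<in>{n..N}. lam k *\<^sub>R F k x)"
      by (intro tend_add[OF cA] tend_scale[OF cS] conv0 tendsto_const)
    then have conv: "(\<lambda>j. y - (\<Sum>k\<in>{n..N}. mu j k *\<^sub>R F k x)) \<longlonglongrightarrow> y - (\<Sum>k\<in>{n..N}. lam k *\<^sub>R F k x)"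
      by simp
    have "eventually (\<lambda>j. y - (\<Sum>k\<in>{n..N}. mu j k *\<^sub>R F k x) \<in> V n) sequentially"
      by (rule topological_tendstoD[OF conv V(1) vV])
    then obtain j where j: "y - (\<Sum>k\<in>{n..N}. mu j k *\<^sub>R F k x) \<in> V n"
      unfolding eventually_sequentially by blast
    have rat: "mu j k \<in> \<rat>" for k
      unfolding mu_def fl_def by (auto intro!: Rats_diff Rats_sum fl_rat)
    define qs where "qs = map (\<lambda>k. SOME r. real_of_rat r = mu j k) [0..<Suc N]"
    have lqmu: "lq qs k = mu j k" if "k \<le> N" for k
    proof -
      obtain r where "mu j k = real_of_rat r" using rat[of k] by (auto elim: Rats_cases)
      then have "real_of_rat (SOME r. real_of_rat r = mu j k) = mu j k"
        by (metis (mono_tags, lifting) someI)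
      moreover have "qs ! k = (SOME r. real_of_rat r = mu j k)" "k < length qs"
        unfolding qs_def using that by (simp_all del: upt_Suc)
      ultimately show ?thesis unfolding lq_def by simp
    qed
    have eqS: "sum (lq qs) {n..N} = sum (mu j) {n..N}" using lqmu by (intro sum.cong) auto
    have eqC: "(\<Sum>k\<in>{n..N}. lq qs k *\<^sub>R F k x) = (\<Sum>k\<in>{n..N}. mu j k *\<^sub>R F k x)"
      using lqmu by (intro sum.cong) auto
    have "p \<in> P n N (lq qs)"
      unfolding P_def p using lqmu mu_nonneg[of j] mu_sum[of j] j eqS eqC by auto
    moreover have "from_nat (to_nat (N, qs)) = (N, qs)" by simp
    ultimately have "p \<in> Q n (to_nat (N, qs))" unfolding Q_def by simp
    then show ?thesis by blast
  qed

  have GQ: "G n = (\<Union>i. Q n i)" for n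
  proof
    show "G n \<subseteq> (\<Union>i. Q n i)" unfolding G_def using dens by blast
    show "(\<Union>i. Q n i) \<subseteq> G n" unfolding G_def Q_def by blast
  qed
  have SG: "borel_Sigma \<alpha> (G n)" for n
    unfolding GQ Q_def by (intro Sig_union[OF nz] SP)

  have cvx: "convex (xsection (G n) x)" for n x
    unfolding convex_def
  proof (intro ballI allI impI)
    fix y1 y2 and u w :: real
    assume y1: "y1 \<in> xsection (G n) x" and y2: "y2 \<in> xsection (G n) x"
      and u: "0 \<le> u" and w: "0 \<le> w" and uw: "u + w = 1"
    obtain N1 l1 where P1: "(x, y1) \<in> P n N1 l1" using y1 unfolding xsection_def G_def by auto
    obtain N2 l2 where P2: "(x, y2) \<in> P n N2 l2" using y2 unfolding xsection_def G_def by auto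
    define N where "N = max N1 N2"
    have N12: "N1 \<le> N" "N2 \<le> N" unfolding N_def by auto
    define e1 where "e1 k = (if k \<in> {..N1} then l1 k else 0)" for k
    define e2 where "e2 k = (if k \<in> {..N2} then l2 k else 0)" for k
    define lam where "lam k = u * e1 k + w * e2 k" for k
    have s1: "sum e1 {n..N} = sum l1 {n..N1}" unfolding e1_def by (rule sum_restrict_le[OF N12(1)])
    have s2: "sum e2 {n..N} = sum l2 {n..N2}" unfolding e2_def by (rule sum_restrict_le[OF N12(2)])
    have c1: "(\<Sum>k\<in>{n..N}. e1 k *\<^sub>R F k x) = (\<Sum>k\<in>{n..N1}. l1 k *\<^sub>R F k x)"
    proof -
      have "(\<Sum>k\<in>{n..N}. e1 k *\<^sub>R F k x) = (\<Sum>k\<in>{n..N}. if k \<in> {..N1} then l1 k *\<^sub>R F k x else 0)"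
        unfolding e1_def by (intro sum.cong) auto
      then show ?thesis using sum_restrict_le[OF N12(1)] by simp
    qed
    have c2: "(\<Sum>k\<in>{n..N}. e2 k *\<^sub>R F k x) = (\<Sum>k\<in>{n..N2}. l2 k *\<^sub>R F k x)"
    proof -
      have "(\<Sum>k\<in>{n..N}. e2 k *\<^sub>R F k x) = (\<Sum>k\<in>{n..N}. if k \<in> {..N2} then l2 k *\<^sub>R F k x else 0)"
        unfolding e2_def by (intro sum.cong) auto
      then show ?thesis using sum_restrict_le[OF N12(2)] by simp
    qed
    from P1 have p1: "\<forall>k\<in>{n..N1}. 0 \<le> l1 k" "sum l1 {n..N1} = 1"
      "y1 - (\<Sum>k\<in>{n..N1}. l1 k *\<^sub>R F k x) \<in> V n" unfolding P_def by auto
    from P2 have p2: "\<forall>k\<in>{n..N2}. 0 \<le> l2 k" "sum l2 {n..N2} = 1"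
      "y2 - (\<Sum>k\<in>{n..N2}. l2 k *\<^sub>R F k x) \<in> V n" unfolding P_def by auto
    have lnn: "\<forall>k\<in>{n..N}. 0 \<le> lam k"
      unfolding lam_def e1_def e2_def using p1(1) p2(1) u w by auto
    have lsum: "sum lam {n..N} = 1"
    proof -
      have "sum lam {n..N} = u * sum e1 {n..N} + w * sum e2 {n..N}"
        unfolding lam_def by (simp add: sum.distrib sum_distrib_left)
      then show ?thesis using s1 s2 p1(2) p2(2) uw by simp
    qed
    have lc: "(\<Sum>k\<in>{n..N}. lam k *\<^sub>R F k x) =
        u *\<^sub>R (\<Sum>k\<in>{n..N1}. l1 k *\<^sub>R F k x) + w *\<^sub>R (\<Sum>k\<in>{n..N2}. l2 k *\<^sub>R F k x)"
    proof -
      have "(\<Sum>k\<in>{n..N}. lam k *\<^sub>R F k x) =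
          u *\<^sub>R (\<Sum>k\<in>{n..N}. e1 k *\<^sub>R F k x) + w *\<^sub>R (\<Sum>k\<in>{n..N}. e2 k *\<^sub>R F k x)"
        unfolding lam_def by (simp add: scaleR_add_left sum.distrib scaleR_sum_right)
      then show ?thesis using c1 c2 by simp
    qed
    have "u *\<^sub>R (y1 - (\<Sum>k\<in>{n..N1}. l1 k *\<^sub>R F k x)) + w *\<^sub>R (y2 - (\<Sum>k\<in>{n..N2}. l2 k *\<^sub>R F k x)) \<in> V n"
      using V(2)[of n] p1(3) p2(3) u w uw unfolding convex_def by blast
    moreover have "u *\<^sub>R (y1 - (\<Sum>k\<in>{n..N1}. l1 k *\<^sub>R F k x)) + w *\<^sub>R (y2 - (\<Sum>k\<in>{n..N2}. l2 k *\<^sub>R F k x))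
        = (u *\<^sub>R y1 + w *\<^sub>R y2) - (\<Sum>k\<in>{n..N}. lam k *\<^sub>R F k x)"
      unfolding lc by (simp add: algebra_simps)
    ultimately have "(x, u *\<^sub>R y1 + w *\<^sub>R y2) \<in> P n N lam"
      unfolding P_def using lnn lsum by simp
    then show "u *\<^sub>R y1 + w *\<^sub>R y2 \<in> xsection (G n) x" unfolding xsection_def G_def by blast
  qed

  have "(\<Inter>n. G n) = graph f \<and> (\<forall>x. (\<lambda>n. diam (xsection (G n) x)) \<longlonglongrightarrow> 0)"
  proof (rule graph_diam)
    fix n x
    obtain r where r: "r > 0" "ball 0 r \<subseteq> V n" using V(1,3) open_contains_ball by blast
    have "eventually (\<lambda>k. dist (F k x) (f x) < r) sequentially"
      using F(2) r(1) by (intro tendstoD) auto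
    then obtain M where M: "\<And>k. k \<ge> M \<Longrightarrow> dist (F k x) (f x) < r"
      unfolding eventually_sequentially by blast
    define k where "k = n + M"
    have "dist (f x - F k x) 0 < r" using M[of k] unfolding k_def d0 by (simp add: dist_commute)
    then have vk: "f x - F k x \<in> V n" using r(2) by (auto simp: dist_commute)
    define lam where "lam i = (if i = k then 1 else (0::real))" for i
    have kin: "k \<in> {n..k}" unfolding k_def by simp
    have "sum lam {n..k} = 1" unfolding lam_def using kin by simp
    moreover have "(\<Sum>i\<in>{n..k}. lam i *\<^sub>R F i x) = F k x"
    proof -
      have "(\<Sum>i\<in>{n..k}. lam i *\<^sub>R F i x) = (\<Sum>i\<in>{n..k}. if i = k then F i x else 0)"
        by (intro sum.cong) (auto simp: lam_def)
      also have "\<dots> = F k x" using kin by simp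
      finally show ?thesis .
    qed
    moreover have "\<forall>i\<in>{n..k}. 0 \<le> lam i" unfolding lam_def by simp
    ultimately have "(x, f x) \<in> P n k lam" unfolding P_def using vk by simp
    then show "(x, f x) \<in> G n" unfolding G_def by blast
  next
    fix x and e :: real assume e: "e > 0"
    obtain W where W: "open W" "convex W" "f x \<in> W" "W \<subseteq> ball (f x) e"
      using LC[of "ball (f x) e" "f x"] e by auto
    obtain r where r: "r > 0" "ball (f x) r \<subseteq> W" using W(1,3) open_contains_ball by blast
    have "eventually (\<lambda>k. dist (F k x) (f x) < r/2) sequentially"
      using F(2) r(1) by (intro tendstoD) auto
    then obtain M where M: "\<And>k. k \<ge> M \<Longrightarrow> dist (F k x) (f x) < r/2"
      unfolding eventually_sequentially by blast
    obtain N0 where N0: "inverse (real (Suc N0)) < r/2" using reals_Archimedean r(1) by (metis half_gt_zero)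
    show "\<exists>N. \<forall>n\<ge>N. \<forall>y\<in>xsection (G n) x. dist y (f x) < e"
    proof (intro exI allI impI ballI)
      fix n y assume n: "max M N0 \<le> n" and y: "y \<in> xsection (G n) x"
      then obtain N lam where PP: "(x, y) \<in> P n N lam" unfolding G_def xsection_def by auto
      then have l0: "\<forall>k\<in>{n..N}. 0 \<le> lam k" and l1: "sum lam {n..N} = 1"
        and vV: "y - (\<Sum>k\<in>{n..N}. lam k *\<^sub>R F k x) \<in> V n" unfolding P_def by auto
      define v where "v = y - (\<Sum>k\<in>{n..N}. lam k *\<^sub>R F k x)"
      have "dist v 0 < inverse (real (Suc n))" using V(4)[of n] vV unfolding v_def by (auto simp: dist_commute)
      moreover have "inverse (real (Suc n)) \<le> inverse (real (Suc N0))" using n by (simp add: field_simps)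
      ultimately have dv0: "dist v 0 < r/2" using N0 by linarith
      have zin: "F k x + v \<in> W" if "k \<in> {n..N}" for k
      proof -
        have "dist (F k x + v) (f x) \<le> dist (F k x + v) (F k x) + dist (F k x) (f x)"
          by (rule dist_triangle)
        moreover have "dist (F k x) (f x) < r/2" using M that n by simp
        ultimately have "dist (F k x + v) (f x) < r" using dv0 dv[of "F k x" v] by linarith
        then show ?thesis using r(2) by (auto simp: dist_commute)
      qed
      have "(\<Sum>k\<in>{n..N}. lam k *\<^sub>R (F k x + v)) \<in> W"
        by (rule convex_sum[OF _ W(2) l1]) (use l0 zin in auto)
      moreover have "(\<Sum>k\<in>{n..N}. lam k *\<^sub>R (F k x + v)) = y"
      proof -
        have "(\<Sum>k\<in>{n..N}. lam k *\<^sub>R (F k x + v)) = (\<Sum>k\<in>{n..N}. lam k *\<^sub>R F k x) + sum lam {n..N} *\<^sub>R v"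
          by (simp add: scaleR_add_right sum.distrib scaleR_sum_left)
        then show ?thesis using l1 unfolding v_def by simp
      qed
      ultimately have "y \<in> W" by simp
      then show "dist y (f x) < e" using W(4) by (auto simp: dist_commute)
    qed
  qed
  then show ?thesis using SG cvx unfolding Sigma_strip_def by blast
qed


theorem theorem1p6:
  fixes \<alpha> :: "'o::wellorder"
  assumes "countable_ordinal \<alpha>" and "\<not> ord_zero \<alpha>"
  shows "(\<forall>f :: 'a::topological_space \<Rightarrow> 'b::metric_space. baire_class \<alpha> f \<longrightarrow>
            (\<exists>G :: nat \<Rightarrow> ('a \<times> 'b) set. (\<forall>n. borel_Sigma \<alpha> (G n)) \<and> (\<Inter>n. G n) = graph f \<and>
               (\<forall>x. (\<lambda>n. diam (xsection (G n) x)) \<longlonglongrightarrow> 0)))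
       \<and> (\<forall>f :: 'a \<Rightarrow> 'c::{real_vector, complete_space}. frechet_space TYPE('c) \<and> baire_class \<alpha> f \<longrightarrow>
            (\<exists>G :: nat \<Rightarrow> ('a \<times> 'c) set. (\<forall>n. Sigma_strip \<alpha> (G n)) \<and> (\<Inter>n. G n) = graph f \<and>
               (\<forall>x. (\<lambda>n. diam (xsection (G n) x)) \<longlonglongrightarrow> 0)))"
    using main_part1[OF assms(2)] main_part2[OF assms(2)] by blast

end
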